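(* Let $\mathbf{k}$ be a commutative unital ring and $R$ a $\mathbf{k}$-algebra. Let $P_1,P_2:R\to R$ be extended Rota-Baxter operators of weights $(\lambda_1,\kappa_1)$ and $(\lambda_2,\kappa_2)$ respectively. Suppose there are $\alpha_{ij},\beta_{ij},\gamma_{ij}\in\mathbf{k}$ for $(i,j)\in\{(1,2),(2,1)\}$ such that for $1\le i\neq j\le 2$ and all $u,v\in R$, $$P_i(u)P_j(v)=P_i(uP_j(v))+P_j(P_i(u)v)+\alpha_{ij}P_i(uv)+\beta_{ij}P_j(uv)+\gamma_{ij}uv.$$ If $\beta_{12}+\alpha_{21}=\lambda_1$ and $\alpha_{12}+\beta_{21}=\lambda_2$, then for all $a,b\in\mathbf{k}$ the operator $Q:=aP_1+bP_2$ is an extended Rota-Baxter operator of weight $\big(a\lambda_1+b\lambda_2,\ a^2\kappa_1+b^2\kappa_2+ab(\gamma_{12}+\gamma_{21})\big)$.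
   Context: For $\lambda,\kappa\in\mathbf{k}$, an extended Rota-Baxter operator of weight $(\lambda,\kappa)$ on a $\mathbf{k}$-algebra $R$ is a $\mathbf{k}$-linear map $P:R\to R$ such that $P(x)P(y)=P(xP(y))+P(P(x)y)+\lambda P(xy)+\kappa xy$ for all $x,y\in R$. *)

theory Defs
  imports Main
begin

definition is_algebra :: "('k::comm_ring_1 \<Rightarrow> 'r::ring \<Rightarrow> 'r) \<Rightarrow> bool" where
  "is_algebra sm \<longleftrightarrow>
     (\<forall>c x y. sm c (x + y) = sm c x + sm c y) \<and>
     (\<forall>c d x. sm (c + d) x = sm c x + sm d x) \<and>
     (\<forall>c d x. sm (c * d) x = sm c (sm d x)) \<and>
     (\<forall>x. sm 1 x = x) \<and>
     (\<forall>c x y. sm c (x * y) = sm c x * y) \<and>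
     (\<forall>c x y. sm c (x * y) = x * sm c y)"

definition k_linear :: "('k::comm_ring_1 \<Rightarrow> 'r::ring \<Rightarrow> 'r) \<Rightarrow> ('r \<Rightarrow> 'r) \<Rightarrow> bool" where
  "k_linear sm P \<longleftrightarrow> (\<forall>x y. P (x + y) = P x + P y) \<and> (\<forall>c x. P (sm c x) = sm c (P x))"

definition ext_RB :: "('k::comm_ring_1 \<Rightarrow> 'r::ring \<Rightarrow> 'r) \<Rightarrow> 'k \<Rightarrow> 'k \<Rightarrow> ('r \<Rightarrow> 'r) \<Rightarrow> bool" where
  "ext_RB sm lam kap P \<longleftrightarrow> k_linear sm P \<and>
     (\<forall>x y. P x * P y = P (x * P y) + P (P x * y) + sm lam (P (x * y)) + sm kap (x * y))"

end

theory Submission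
  imports Defs
begin

theorem theorem2p4:
  fixes sm :: "'k::comm_ring_1 \<Rightarrow> 'r::ring \<Rightarrow> 'r"
    and P1 P2 :: "'r \<Rightarrow> 'r"
    and lam1 kap1 lam2 kap2 \<alpha>12 \<beta>12 \<gamma>12 \<alpha>21 \<beta>21 \<gamma>21 a b :: 'k
  assumes alg: "is_algebra sm"
    and P1: "ext_RB sm lam1 kap1 P1"
    and P2: "ext_RB sm lam2 kap2 P2"
    and c12: "\<And>u v. P1 u * P2 v = P1 (u * P2 v) + P2 (P1 u * v)
                 + sm \<alpha>12 (P1 (u * v)) + sm \<beta>12 (P2 (u * v)) + sm \<gamma>12 (u * v)"
    and c21: "\<And>u v. P2 u * P1 v = P2 (u * P1 v) + P1 (P2 u * v)
                 + sm \<alpha>21 (P2 (u * v)) + sm \<beta>21 (P1 (u * v)) + sm \<gamma>21 (u * v)"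
    and h1: "\<beta>12 + \<alpha>21 = lam1"
    and h2: "\<alpha>12 + \<beta>21 = lam2"
  shows "ext_RB sm (a * lam1 + b * lam2) (a^2 * kap1 + b^2 * kap2 + a * b * (\<gamma>12 + \<gamma>21))
           (\<lambda>x. sm a (P1 x) + sm b (P2 x))"
proof -
  have s1: "\<And>c x y. sm c (x + y) = sm c x + sm c y"
   and s2: "\<And>c d x. sm (c + d) x = sm c x + sm d x"
   and s3: "\<And>c d x. sm c (sm d x) = sm (c * d) x"
   and s5: "\<And>c x y. sm c x * y = sm c (x * y)"
   and s6: "\<And>c x y. x * sm c y = sm c (x * y)"
    using alg unfolding is_algebra_def by metis+
  have L1: "\<And>x y. P1 (x + y) = P1 x + P1 y" "\<And>c x. P1 (sm c x) = sm c (P1 x)"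
   and R1: "\<And>x y. P1 x * P1 y = P1 (x * P1 y) + P1 (P1 x * y) + sm lam1 (P1 (x * y)) + sm kap1 (x * y)"
    using P1 unfolding ext_RB_def k_linear_def by blast+
  have L2: "\<And>x y. P2 (x + y) = P2 x + P2 y" "\<And>c x. P2 (sm c x) = sm c (P2 x)"
   and R2: "\<And>x y. P2 x * P2 y = P2 (x * P2 y) + P2 (P2 x * y) + sm lam2 (P2 (x * y)) + sm kap2 (x * y)"
    using P2 unfolding ext_RB_def k_linear_def by blast+
  show ?thesis
    unfolding ext_RB_def k_linear_def
  proof (intro conjI allI)
    fix x y
    show "sm a (P1 (x + y)) + sm b (P2 (x + y)) = sm a (P1 x) + sm b (P2 x) + (sm a (P1 y) + sm b (P2 y))"
      by (simp add: L1 L2 s1 add_ac)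
  next
    fix c x
    show "sm a (P1 (sm c x)) + sm b (P2 (sm c x)) = sm c (sm a (P1 x) + sm b (P2 x))"
      by (simp add: L1 L2 s1 s3 mult.commute)
  next
    fix x y
    show "(sm a (P1 x) + sm b (P2 x)) * (sm a (P1 y) + sm b (P2 y)) =
         sm a (P1 (x * (sm a (P1 y) + sm b (P2 y)))) + sm b (P2 (x * (sm a (P1 y) + sm b (P2 y)))) +
         (sm a (P1 ((sm a (P1 x) + sm b (P2 x)) * y)) + sm b (P2 ((sm a (P1 x) + sm b (P2 x)) * y))) +
         sm (a * lam1 + b * lam2) (sm a (P1 (x * y)) + sm b (P2 (x * y))) +
         sm (a\<^sup>2 * kap1 + b\<^sup>2 * kap2 + a * b * (\<gamma>12 + \<gamma>21)) (x * y)"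
      unfolding h1[symmetric] h2[symmetric]
      by (simp add: distrib_left distrib_right s1 s3 s5 s6 L1 L2 R1 R2 c12 c21 h1[symmetric] h2[symmetric]
            s2 ring_distribs power2_eq_square mult_ac add_ac)
  qed
qed

end
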